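(* Let $\mathcal V$ be a finite alphabet, $\mathcal V^*$ the set of finite strings over $\mathcal V$, $e$ an environment, and $p(c,t)$ a joint distribution over implementations $c\in\mathcal V^*$ and test suites $t\in\mathcal V^*$ with marginals $p(c)$ and $p(t)$. Let $R(c,t\mid e):=\frac{1}{|t|}\sum_{k=1}^{|t|}O_k(c,t\mid e)\in[0,1]$. Define the functional equivalence classes $\mathcal N_c^\infty:=\{c'\in\mathcal V^*: O(c,t\mid e)=O(c',t\mid e)\text{ for all } t \text{ with } p(t)>0\}$ and $p(\mathcal N_c^\infty):=\sum_{c'\in\mathcal N_c^\infty}p(c')$. Assume: (i) (code-test calibration) $p(\mathcal N_c^\infty)=\mathbb P_{t\sim p}[R(c,t\mid e)=1]$ for every $c\in\mathcal V^*$; (ii) (well-specification) for $t\sim p$, almost surely there exists exactly one equivalence class $\mathcal N_c^\infty$ such that $R(c,t\mid e)=1$. For a set of $k$ distinct equivalence classes $\{\mathcal N_{c_i}^\infty\}_{i=1}^k$ define $\mathrm{Pass@k}(\{\mathcal N_{c_i}^\infty\}_{i=1}^k):=\mathbb P_{t\sim p}[\exists\, i\in\{1,\dots,k\}: R(c_i,t\mid e)=1]$. Then $\mathrm{Pass@k}$ is maximized (over all choices of $k$ distinct equivalence classes) by greedily selecting the $k$ classes $\mathcal N_c^\infty$ with the largest values of $p(\mathcal N_c^\infty)$.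
   Context: A test suite $t\in\mathcal V^*$ consists of $|t|\ge1$ test cases. For an environment $e$, an implementation $c$ and a test suite $t$, the test harness returns a deterministic output vector $O(c,t\mid e)=(O_1(c,t\mid e),\dots,O_{|t|}(c,t\mid e))\in\{0,1\}^{|t|}$, where $0$ indicates failure and $1$ success of the $k$-th test case. Codes in the same class $\mathcal N_c^\infty$ have the same value of $R(\cdot,t\mid e)$ for all $t$ with $p(t)>0$. *)

theory Defs
  imports "HOL-Probability.Probability"
begin

text \<open>For an environment e, the harness output Out e c t is a 0/1 vector of
length ntests t (number of test cases of t); Out e c t k is the k-th entry, k = 1..ntests t
(True = success).\<close>

definition reward ::
  "('e \<Rightarrow> 'v list \<Rightarrow> 'v list \<Rightarrow> nat \<Rightarrow> bool) \<Rightarrow> ('v list \<Rightarrow> nat) \<Rightarrow> 'e \<Rightarrow> 'v list \<Rightarrow> 'v list \<Rightarrow> real"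
  where "reward Out ntests e c t = (\<Sum>k = 1..ntests t. of_bool (Out e c t k)) / real (ntests t)"

definition code_marg :: "('a \<times> 'b) pmf \<Rightarrow> 'a pmf" where "code_marg p = map_pmf fst p"
definition test_marg :: "('a \<times> 'b) pmf \<Rightarrow> 'b pmf" where "test_marg p = map_pmf snd p"

definition equiv_class ::
  "('e \<Rightarrow> 'v list \<Rightarrow> 'v list \<Rightarrow> nat \<Rightarrow> bool) \<Rightarrow> ('v list \<Rightarrow> nat) \<Rightarrow> 'e \<Rightarrow> ('v list \<times> 'v list) pmf
    \<Rightarrow> 'v list \<Rightarrow> 'v list set"
  where "equiv_class Out ntests e p c =
    {c'. \<forall>t. pmf (test_marg p) t > 0 \<longrightarrow> (\<forall>k \<in> {1..ntests t}. Out e c t k = Out e c' t k)}"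

definition class_prob ::
  "('e \<Rightarrow> 'v list \<Rightarrow> 'v list \<Rightarrow> nat \<Rightarrow> bool) \<Rightarrow> ('v list \<Rightarrow> nat) \<Rightarrow> 'e \<Rightarrow> ('v list \<times> 'v list) pmf
    \<Rightarrow> 'v list \<Rightarrow> real"
  where "class_prob Out ntests e p c = measure_pmf.prob (code_marg p) (equiv_class Out ntests e p c)"

text \<open>Pass@k of the classes represented by the list cs = [c_1,...,c_k].\<close>
definition pass_at ::
  "('e \<Rightarrow> 'v list \<Rightarrow> 'v list \<Rightarrow> nat \<Rightarrow> bool) \<Rightarrow> ('v list \<Rightarrow> nat) \<Rightarrow> 'e \<Rightarrow> ('v list \<times> 'v list) pmf
    \<Rightarrow> 'v list list \<Rightarrow> real"
  where "pass_at Out ntests e p cs =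
    measure_pmf.prob (test_marg p) {t. \<exists>i < length cs. reward Out ntests e (cs ! i) t = 1}"

end

theory Submission
  imports Defs
begin

lemma comb_ineq:
  fixes f :: "'a \<Rightarrow> real"
  assumes "finite C" "finite D" "card D = card C"
    and "\<forall>X\<in>D. X \<notin> C \<longrightarrow> (\<forall>Y\<in>C. f X \<le> f Y)"
  shows "sum f D \<le> sum f C"
proof -
  have c1: "card (D - C) = card D - card (D \<inter> C)"
    using assms(2) by (intro card_Diff_subset_Int) (rule finite_Int, rule disjI1)
  have c2: "card (C - D) = card C - card (C \<inter> D)"
    using assms(1) by (intro card_Diff_subset_Int) (rule finite_Int, rule disjI1)
  have cd: "card (D - C) = card (C - D)"
    unfolding c1 c2 assms(3) Int_commute[of D C] ..
  then obtain h where h: "bij_betw h (D - C) (C - D)"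
    using finite_same_card_bij[OF finite_Diff[OF assms(2)] finite_Diff[OF assms(1)] cd] by (elim exE)
  have "sum f (D - C) \<le> sum (f \<circ> h) (D - C)"
    apply (rule sum_mono)
    using assms(4) h bij_betwE by fastforce
  also have "\<dots> = sum f (C - D)"
    using sum.reindex_bij_betw[OF h] by simp
  finally have le: "sum f (D - C) \<le> sum f (C - D)" .
  have "sum f D = sum f (D \<inter> C) + sum f (D - C)"
    using assms(2) by (metis add.commute sum.Int_Diff)
  moreover have "sum f C = sum f (D \<inter> C) + sum f (C - D)"
    using assms(1) by (metis Int_commute add.commute sum.Int_Diff)
  ultimately show ?thesis using le by simp
qed

lemma pass_at_sum:
  fixes Out :: "'e \<Rightarrow> ('v::finite) list \<Rightarrow> 'v list \<Rightarrow> nat \<Rightarrow> bool"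
    and ntests :: "'v list \<Rightarrow> nat"
    and p :: "('v list \<times> 'v list) pmf"
  assumes calibration: "\<forall>c. class_prob Out ntests e p c =
          measure_pmf.prob (test_marg p) {t. reward Out ntests e c t = 1}"
    and well_specified: "AE t in measure_pmf (test_marg p).
          \<exists>!C. C \<in> range (equiv_class Out ntests e p) \<and> (\<exists>c \<in> C. reward Out ntests e c t = 1)"
    and dist: "distinct (map (equiv_class Out ntests e p) ds)"
  shows "pass_at Out ntests e p ds =
     sum (measure_pmf.prob (code_marg p)) (equiv_class Out ntests e p ` set ds)"
proof -
  define cls where "cls = equiv_class Out ntests e p"
  define S where "S = set_pmf (test_marg p)"
  define E where "E i = {t. reward Out ntests e (ds ! i) t = 1} \<inter> S" for i
  have refl: "c \<in> cls c" for c unfolding cls_def equiv_class_def by auto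
  have ws: "\<forall>t\<in>S. \<exists>!C. C \<in> range cls \<and> (\<exists>c \<in> C. reward Out ntests e c t = 1)"
    using well_specified unfolding S_def cls_def by (simp add: AE_measure_pmf_iff)
  have disj: "disjoint_family_on E {..<length ds}"
    unfolding disjoint_family_on_def
  proof (intro ballI impI)
    fix i j assume ij: "i \<in> {..<length ds}" "j \<in> {..<length ds}" "i \<noteq> j"
    have ne: "cls (ds ! i) \<noteq> cls (ds ! j)"
      using dist ij nth_eq_iff_index_eq[OF dist, of i j] unfolding cls_def by simp
    show "E i \<inter> E j = {}"
    proof (rule ccontr)
      assume "E i \<inter> E j \<noteq> {}"
      then obtain t where t: "t \<in> S" "reward Out ntests e (ds ! i) t = 1"
        "reward Out ntests e (ds ! j) t = 1" unfolding E_def by auto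
      from ws t(1) obtain C where "\<forall>C'. C' \<in> range cls \<and> (\<exists>c \<in> C'. reward Out ntests e c t = 1) \<longrightarrow> C' = C"
        by metis
      then have "cls (ds ! i) = C" "cls (ds ! j) = C" using t refl by blast+
      with ne show False by simp
    qed
  qed
  have "pass_at Out ntests e p ds = measure_pmf.prob (test_marg p) (\<Union>i\<in>{..<length ds}. E i)"
  proof -
    have "{t. \<exists>i < length ds. reward Out ntests e (ds ! i) t = 1} \<inter> S = (\<Union>i\<in>{..<length ds}. E i)"
      unfolding E_def by auto
    then show ?thesis unfolding pass_at_def S_def
      using measure_Int_set_pmf[of "test_marg p" "{t. \<exists>i < length ds. reward Out ntests e (ds ! i) t = 1}"]
      by simp
  qed
  also have "\<dots> = (\<Sum>i<length ds. measure_pmf.prob (test_marg p) (E i))"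
    by (rule measure_pmf.finite_measure_finite_Union) (use disj in auto)
  also have "\<dots> = (\<Sum>i<length ds. measure_pmf.prob (code_marg p) (cls (ds ! i)))"
  proof (rule sum.cong)
    fix i show "measure_pmf.prob (test_marg p) (E i) = measure_pmf.prob (code_marg p) (cls (ds ! i))"
      using calibration unfolding E_def S_def class_prob_def cls_def
      by (simp add: measure_Int_set_pmf)
  qed simp
  also have "\<dots> = sum_list (map (measure_pmf.prob (code_marg p)) (map cls ds))"
    by (simp add: sum_list_sum_nth atLeast0LessThan)
  also have "\<dots> = sum (measure_pmf.prob (code_marg p)) (cls ` set ds)"
    using sum_list_distinct_conv_sum_set[OF dist, of "measure_pmf.prob (code_marg p)"]
    unfolding cls_def by (simp only: set_map)
  finally show ?thesis unfolding cls_def .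
qed

theorem proposition4p13:
  fixes Out :: "'e \<Rightarrow> ('v::finite) list \<Rightarrow> 'v list \<Rightarrow> nat \<Rightarrow> bool"
    and ntests :: "'v list \<Rightarrow> nat"
    and e :: 'e
    and p :: "('v list \<times> 'v list) pmf"
    and k :: nat
    and cs :: "'v list list"
  assumes nonempty_suites: "\<forall>t. ntests t \<ge> 1"
    and calibration: "\<forall>c. class_prob Out ntests e p c =
          measure_pmf.prob (test_marg p) {t. reward Out ntests e c t = 1}"
    and well_specified: "AE t in measure_pmf (test_marg p).
          \<exists>!C. C \<in> range (equiv_class Out ntests e p) \<and> (\<exists>c \<in> C. reward Out ntests e c t = 1)"
    and cs_len: "length cs = k"
    and cs_distinct: "distinct (map (equiv_class Out ntests e p) cs)"
    and cs_greedy: "\<forall>c. equiv_class Out ntests e p c \<notin> equiv_class Out ntests e p ` set cs \<longrightarrow>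
          (\<forall>i < k. class_prob Out ntests e p c \<le> class_prob Out ntests e p (cs ! i))"
  shows "\<forall>ds. length ds = k \<and> distinct (map (equiv_class Out ntests e p) ds) \<longrightarrow>
           pass_at Out ntests e p ds \<le> pass_at Out ntests e p cs"
proof (intro allI impI)
  fix ds assume ds: "length ds = k \<and> distinct (map (equiv_class Out ntests e p) ds)"
  let ?cls = "equiv_class Out ntests e p"
  have cD: "card (?cls ` set ds) = k"
    using ds distinct_card[of "map ?cls ds"] by simp
  have cC: "card (?cls ` set cs) = k"
    using cs_len cs_distinct distinct_card[of "map ?cls cs"] by simp
  have "sum (measure_pmf.prob (code_marg p)) (?cls ` set ds)
      \<le> sum (measure_pmf.prob (code_marg p)) (?cls ` set cs)"
  proof (rule comb_ineq)
    show "\<forall>X\<in>?cls ` set ds. X \<notin> ?cls ` set cs \<longrightarrow>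
      (\<forall>Y\<in>?cls ` set cs. measure_pmf.prob (code_marg p) X \<le> measure_pmf.prob (code_marg p) Y)"
    proof (intro ballI impI)
      fix X Y assume X: "X \<in> ?cls ` set ds" "X \<notin> ?cls ` set cs" and Y: "Y \<in> ?cls ` set cs"
      obtain c where c: "X = ?cls c" using X by auto
      obtain i where i: "i < k" "Y = ?cls (cs ! i)" using Y cs_len by (auto simp: in_set_conv_nth)
      show "measure_pmf.prob (code_marg p) X \<le> measure_pmf.prob (code_marg p) Y"
      proof -
        have "class_prob Out ntests e p c \<le> class_prob Out ntests e p (cs ! i)"
          using cs_greedy[rule_format, of c i] X(2) c i(1) by simp
        then show ?thesis using c i(2) unfolding class_prob_def by simp
      qed
    qed
  next
    show "finite (?cls ` set cs)" by (rule finite_imageI) (rule finite_set)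
  next
    show "finite (?cls ` set ds)" by (rule finite_imageI) (rule finite_set)
  next
    show "card (?cls ` set ds) = card (?cls ` set cs)" using cD cC by (rule trans_sym)
  qed
  moreover have "pass_at Out ntests e p ds = sum (measure_pmf.prob (code_marg p)) (?cls ` set ds)"
    using ds by (intro pass_at_sum[OF calibration well_specified]) simp
  moreover have "pass_at Out ntests e p cs = sum (measure_pmf.prob (code_marg p)) (?cls ` set cs)"
    by (rule pass_at_sum[OF calibration well_specified cs_distinct])
  ultimately show "pass_at Out ntests e p ds \<le> pass_at Out ntests e p cs"
    by simp
qed

end
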